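(* For any coprime $r>1$ and $0<a<r$, on the Danilov resolution of $\frac1r(1,a,r-a)$ one has $X_i=D_X+R_i-R_{i+1}$ for all $i=0,\dots,r-1$ (indices mod $r$).
   Context: Notation: for integers $s$ and $t>0$, $\langle s\rangle_t$ is the least non-negative integer congruent to $s$ modulo $t$. A pair of integers $(r,a)$ is admissible if $r\ge1$, $0\le a<r$, $\gcd(r,a)=1$ (so $a=0$ only for $r=1$). For admissible $(r,a)$ put $N(r,a)=\mathbb Z^3+\mathbb Z\cdot\frac1r(1,a,r-a)\subset\mathbb Q^3$; $e_1,e_2,e_3$ is the standard basis, $e_j^*$ the $j$-th coordinate function, and $\Delta(r,a)$ the cone spanned by $e_1,e_2,e_3$. Let $b$ be an inverse of $a$ modulo $r$ and $p_i=\frac1r(\langle -ib\rangle_r,r-i,i)$, $i=0,\dots,r$ (so $p_0=e_2$, $p_r=e_3$, $p_{r-a}=\frac1r(1,a,r-a)$). For $r>1$ let $(r_L,a_L)=(r-a,\langle r\rangle_{r-a})$, $(r_R,a_R)=(a,\langle -r\rangle_a)$; there are lattice isomorphisms $L:N(r_L,a_L)\to N(r,a)$, $R:N(r_R,a_R)\to N(r,a)$ with $L(e_1)=e_1$, $L(e_2)=e_2$, $L(e_3)=p_{r-a}$, $R(e_1)=e_1$, $R(e_2)=p_{r-a}$, $R(e_3)=e_3$. The Danilov fan $\Sigma(r,a)$ is defined recursively: $\Sigma(1,0)$ is $\Delta(1,0)$ with its faces; for $r>1$, $\Sigma(r,a)$ consists of the cone spanned by $e_2,e_3,p_{r-a}$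 with its faces, together with $L(\Sigma(r_L,a_L))$ and $R(\Sigma(r_R,a_R))$. The Danilov resolution $Y$ is the smooth toric variety of $\Sigma(r,a)$, with torus $T$; its rays are spanned by $e_1,p_0,\dots,p_r$; $D_i$ is the $T$-invariant prime divisor of the ray through $p_i$ and $E_j$ that of $e_j$. The permutation $\tau(r,a,\cdot)$ of $\{0,\dots,r-1\}$: if $a\in\{1,r-1\}$, $\tau(r,a,i)=\langle ai-1\rangle_r$; otherwise $\tau(r,a,i)=\tau(r-a,\langle r\rangle_{r-a},\langle i\rangle_{r-a})$ for $i\ge a$ and $\tau(r,a,i)=(r-a)+\tau(a,\langle -r\rangle_a,i)$ for $i<a$. With indices mod $r$, on $Y$ define $Z_i=\sum_{k=\tau(r,a,i)+1}^{r}D_k$ ($i=0,\dots,r-1$) and let $X_0,\dots,X_{r-1}$ be the unique divisors with $X_0=E_1$ and $X_i+Z_{i+1}=Z_i+X_{i-a}$ for all $i$. Define the $\mathbb Q$-divisors $D_X=E_1+\sum_{i=0}^r e_1^*(p_i)D_i$, $D_Z=\sum_{i=0}^r e_3^*(p_i)D_i$, and let $R_0,\dots,R_{r-1}$ be the unique $\mathbb Q$-divisors with $R_0=0$ and $Z_i=D_Z+R_i-R_{i-a}$ for all $i$. *)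

theory Defs
  imports Complex_Main "HOL-Number_Theory.Cong" "HOL-Library.Function_Algebras"
begin

definition admissible :: "int \<Rightarrow> int \<Rightarrow> bool" where
  "admissible r a \<longleftrightarrow> 1 \<le> r \<and> 0 \<le> a \<and> a < r \<and> coprime r a"

text \<open>An inverse b of a modulo r (the data below does not depend on the choice).\<close>
definition binv :: "int \<Rightarrow> int \<Rightarrow> int" where
  "binv r a = (SOME b. [a * b = 1] (mod r))"

definition pt :: "int \<Rightarrow> int \<Rightarrow> int \<Rightarrow> rat \<times> rat \<times> rat" where
  "pt r a i = (of_int ((- i * binv r a) mod r) / of_int r,
               of_int (r - i) / of_int r, of_int i / of_int r)"

definition e1star :: "rat \<times> rat \<times> rat \<Rightarrow> rat" where "e1star v = fst v"
definition e2star :: "rat \<times> rat \<times> rat \<Rightarrow> rat" where "e2star v = fst (snd v)"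
definition e3star :: "rat \<times> rat \<times> rat \<Rightarrow> rat" where "e3star v = snd (snd v)"

text \<open>The permutation tau(r,a,.) of {0..r-1} (values on non-admissible input are junk).\<close>
function tau :: "int \<Rightarrow> int \<Rightarrow> int \<Rightarrow> int" where
  "tau r a i =
     (if r \<le> 1 \<or> a \<le> 0 \<or> r \<le> a \<or> a = 1 \<or> a = r - 1 then (a * i - 1) mod r
      else if a \<le> i then tau (r - a) (r mod (r - a)) (i mod (r - a))
      else (r - a) + tau a ((- r) mod a) i)"
  by pat_completeness auto
termination
  by (relation "measure (\<lambda>(r, a, i). nat r)") auto

text \<open>The rays of the Danilov fan are spanned by e_1 and p_0, ..., p_r. A T-invariant
  (Q-)divisor on Y is a formal (Q-)linear combination of the T-invariant prime divisors,
  i.e. a function from the rays to int (resp. rat). \<open>RE1\<close> is the ray of e_1 (divisor E_1),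
  \<open>RD k\<close> the ray through p_k (divisor D_k), 0 \<le> k \<le> r.\<close>
datatype ray = RE1 | RD int

type_synonym divisor = "ray \<Rightarrow> int"
type_synonym qdivisor = "ray \<Rightarrow> rat"

definition prime_div :: "ray \<Rightarrow> ray \<Rightarrow> 'a::zero_neq_one" where
  "prime_div \<rho> = (\<lambda>\<sigma>. if \<sigma> = \<rho> then 1 else 0)"

abbreviation E1 :: "ray \<Rightarrow> 'a::zero_neq_one" where "E1 \<equiv> prime_div RE1"
abbreviation Dv :: "int \<Rightarrow> ray \<Rightarrow> 'a::zero_neq_one" where "Dv k \<equiv> prime_div (RD k)"

definition qdiv_of :: "divisor \<Rightarrow> qdivisor" where
  "qdiv_of X = (\<lambda>\<rho>. of_int (X \<rho>))"

definition smul :: "rat \<Rightarrow> qdivisor \<Rightarrow> qdivisor" where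
  "smul c D = (\<lambda>\<rho>. c * D \<rho>)"

definition Zdiv :: "int \<Rightarrow> int \<Rightarrow> int \<Rightarrow> divisor" where
  "Zdiv r a i = (\<Sum>k\<in>{tau r a (i mod r) + 1 .. r}. Dv k)"

definition Xdiv :: "int \<Rightarrow> int \<Rightarrow> int \<Rightarrow> divisor" where
  "Xdiv r a = (THE X. (\<forall>i. X i = X (i mod r)) \<and> X 0 = E1 \<and>
      (\<forall>i. X i + Zdiv r a (i + 1) = Zdiv r a i + X (i - a)))"

definition DXdiv :: "int \<Rightarrow> int \<Rightarrow> qdivisor" where
  "DXdiv r a = E1 + (\<Sum>i\<in>{0..r}. smul (e1star (pt r a i)) (Dv i))"

definition DZdiv :: "int \<Rightarrow> int \<Rightarrow> qdivisor" where
  "DZdiv r a = (\<Sum>i\<in>{0..r}. smul (e3star (pt r a i)) (Dv i))"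

definition Rdiv :: "int \<Rightarrow> int \<Rightarrow> int \<Rightarrow> qdivisor" where
  "Rdiv r a = (THE R. (\<forall>i. R i = R (i mod r)) \<and> R 0 = 0 \<and>
      (\<forall>i. qdiv_of (Zdiv r a i) = DZdiv r a + R i - R (i - a)))"

end

theory Submission
  imports Defs
begin

definition cl :: "int \<Rightarrow> int \<Rightarrow> int" where "cl r n = - ((- n) div r)"

lemma le_div_iff_int: "0 < (r::int) \<Longrightarrow> k \<le> m div r \<longleftrightarrow> k * r \<le> m"
proof
  assume r: "0 < r" and h: "k \<le> m div r"
  have "k * r \<le> (m div r) * r" using h r by (simp add: mult_right_mono)
  moreover have "(m div r) * r + m mod r = m" by simp
  moreover have "0 \<le> m mod r" using r by simp
  ultimately show "k * r \<le> m" by linarith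
next
  assume r: "0 < r" and h: "k * r \<le> m"
  show "k \<le> m div r"
  proof (rule ccontr)
    assume "\<not> ?thesis"
    then have "(m div r + 1) * r \<le> k * r" using r by (simp add: mult_right_mono)
    then have "r * (m div r) + r \<le> k * r" by (simp add: algebra_simps)
    moreover have "r * (m div r) + m mod r = m" by simp
    moreover have "m mod r < r" using r by simp
    ultimately show False using h by linarith
  qed
qed

lemma cl_le_iff: "0 < r \<Longrightarrow> cl r n \<le> N \<longleftrightarrow> n \<le> N * r"
proof -
  assume r: "0 < r"
  have "cl r n \<le> N \<longleftrightarrow> -N \<le> (-n) div r" unfolding cl_def by linarith
  also have "\<dots> \<longleftrightarrow> -N * r \<le> -n" using le_div_iff_int[OF r] by blast
  also have "\<dots> \<longleftrightarrow> n \<le> N * r" by simp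
  finally show ?thesis .
qed

lemma cl_eqI:
  assumes "0 < r" "0 < s" "\<And>N. n \<le> N * r \<longleftrightarrow> m \<le> N * s"
  shows "cl r n = cl s m"
proof -
  have "cl r n \<le> cl s m" using cl_le_iff[OF assms(1)] cl_le_iff[OF assms(2)] assms(3) by blast
  moreover have "cl s m \<le> cl r n" using cl_le_iff[OF assms(1)] cl_le_iff[OF assms(2)] assms(3) by blast
  ultimately show ?thesis by simp
qed

lemma cl_add: "0 < r \<Longrightarrow> cl r (n + k * r) = cl r n + k"
proof -
  assume r: "0 < r"
  have "(- (n + k * r)) div r = (- n + (-k) * r) div r" by (simp add: algebra_simps)
  also have "\<dots> = -k + (-n) div r" using r by (subst div_mult_self1) auto
  finally show ?thesis unfolding cl_def by simp
qed

definition chi :: "int \<Rightarrow> int \<Rightarrow> int \<Rightarrow> int" where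
  "chi r b x = cl r (x * b) - cl r ((x - 1) * b)"

lemma chi_per: "0 < r \<Longrightarrow> chi r b (x + k * r) = chi r b x"
proof -
  assume r: "0 < r"
  have 1: "(x + k * r) * b = x * b + (k * b) * r" by (simp add: algebra_simps)
  have 2: "(x + k * r - 1) * b = (x - 1) * b + (k * b) * r" by (simp add: algebra_simps)
  show ?thesis unfolding chi_def 1 2 cl_add[OF r] by simp
qed

lemma chi_mod: "0 < r \<Longrightarrow> chi r b (x mod r) = chi r b x"
proof -
  assume r: "0 < r"
  have "x = x mod r + (x div r) * r" by simp
  then have "chi r b x = chi r b (x mod r + (x div r) * r)" by simp
  also have "\<dots> = chi r b (x mod r)" using chi_per[OF r] by blast
  finally show ?thesis by simp
qed

lemma EL:
  assumes a: "0 < a" "a < r" and H: "a * b - q * r = 1"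
    and x: "-(r - a - 1) \<le> x" "x \<le> r - 1"
  shows "cl r (x * b) = cl (r - a) (x * (b - q))"
proof (rule cl_eqI)
  show "0 < r" "0 < r - a" using a by auto
  fix N
  show "x * b \<le> N * r \<longleftrightarrow> x * (b - q) \<le> N * (r - a)"
  proof
    assume h: "x * b \<le> N * r"
    show "x * (b - q) \<le> N * (r - a)"
    proof (rule ccontr)
      assume "\<not> ?thesis"
      define v where "v = x * (b - q) - N * (r - a)"
      define u where "u = N * r - x * b"
      have v1: "1 \<le> v" using \<open>\<not> _\<close> v_def by linarith
      have u0: "0 \<le> u" using h u_def by linarith
      have xe: "x = a * v + (r - a) * (u + v)"
        unfolding u_def v_def using H by algebra
      have "a \<le> a * v" using v1 a by simp
      moreover have "r - a \<le> (r - a) * (u + v)" using v1 u0 a by simp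
      ultimately show False using xe x by linarith
    qed
  next
    assume h: "x * (b - q) \<le> N * (r - a)"
    show "x * b \<le> N * r"
    proof (rule ccontr)
      assume "\<not> ?thesis"
      define v where "v = x * b - N * r"
      define u where "u = N * (r - a) - x * (b - q)"
      have v1: "1 \<le> v" using \<open>\<not> _\<close> v_def by linarith
      have u0: "0 \<le> u" using h u_def by linarith
      have xe: "x = - ((r - a) * v + r * u)"
        unfolding u_def v_def using H by algebra
      have "r - a \<le> (r - a) * v" using v1 a by simp
      moreover have "0 \<le> r * u" using u0 a by simp
      ultimately show False using xe x by linarith
    qed
  qed
qed

lemma ER:
  assumes a: "0 < a" "a < r" and H: "a * b - q * r = 1"
    and y: "-(r - 1) \<le> y" "y \<le> a - 1"
  shows "cl r (y * b) = cl a (y * q)"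
proof (rule cl_eqI)
  show "0 < r" "0 < a" using a by auto
  fix N
  show "y * b \<le> N * r \<longleftrightarrow> y * q \<le> N * a"
  proof
    assume h: "y * b \<le> N * r"
    show "y * q \<le> N * a"
    proof (rule ccontr)
      assume "\<not> ?thesis"
      define v where "v = y * q - N * a"
      define u where "u = N * r - y * b"
      have v1: "1 \<le> v" using \<open>\<not> _\<close> v_def by linarith
      have u0: "0 \<le> u" using h u_def by linarith
      have xe: "y = - (a * u + r * v)"
        unfolding u_def v_def using H by algebra
      have "r \<le> r * v" using v1 a by simp
      moreover have "0 \<le> a * u" using u0 a by simp
      ultimately show False using xe y by linarith
    qed
  next
    assume h: "y * q \<le> N * a"
    show "y * b \<le> N * r"
    proof (rule ccontr)
      assume "\<not> ?thesis"
      define v where "v = y * b - N * r"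
      define u where "u = N * a - y * q"
      have v1: "1 \<le> v" using \<open>\<not> _\<close> v_def by linarith
      have u0: "0 \<le> u" using h u_def by linarith
      have xe: "y = r * u + a * v"
        unfolding u_def v_def using H by algebra
      have "a \<le> a * v" using v1 a by simp
      moreover have "0 \<le> r * u" using u0 a by simp
      ultimately show False using xe y by linarith
    qed
  qed
qed

declare tau.simps[simp del]

abbreviation "tbase r a \<equiv> (r \<le> 1 \<or> a \<le> 0 \<or> r \<le> a \<or> a = 1 \<or> a = r - 1)"

lemma tau_base: "tbase r a \<Longrightarrow> tau r a i = (a * i - 1) mod r"
  by (subst tau.simps) simp

lemma tau_L: "\<not> tbase r a \<Longrightarrow> a \<le> i \<Longrightarrow> tau r a i = tau (r - a) (r mod (r - a)) (i mod (r - a))"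
  by (subst tau.simps) simp

lemma tau_R: "\<not> tbase r a \<Longrightarrow> \<not> a \<le> i \<Longrightarrow> tau r a i = (r - a) + tau a ((- r) mod a) i"
  by (subst tau.simps) simp

definition adm :: "int \<Rightarrow> int \<Rightarrow> bool" where
  "adm r a \<longleftrightarrow> 1 < r \<and> 0 < a \<and> a < r \<and> coprime r a"

lemma adm_L:
  assumes "adm r a" "\<not> tbase r a"
  shows "adm (r - a) (r mod (r - a))"
proof -
  have r: "1 < r" "1 < a" "a < r - 1" "coprime r a" using assms unfolding adm_def by auto
  have m: "r mod (r - a) = a mod (r - a)"
  proof -
    have "r mod (r - a) = (a + (r - a)) mod (r - a)" by simp
    also have "\<dots> = a mod (r - a)" by (rule mod_add_self2)
    finally show ?thesis .
  qed
  have "(r - a) mod a = r mod a"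
    by (metis add_diff_cancel_left' diff_add_cancel mod_add_self2)
  then have "coprime a (r - a)"
    using r(4) coprime_mod_right_iff[of a "r - a"] coprime_mod_right_iff[of a r] r(2)
    by (simp add: coprime_commute)
  then have c: "coprime (r - a) (r mod (r - a))"
    using m coprime_mod_right_iff[of "r - a" a] r by (simp add: coprime_commute)
  have nz: "r mod (r - a) \<noteq> 0"
  proof
    assume "r mod (r - a) = 0"
    then have "coprime (r - a) 0" using c by simp
    then show False using r by simp
  qed
  have "0 \<le> r mod (r - a)" "r mod (r - a) < r - a" using r by auto
  then have "0 < r mod (r - a)" using nz by linarith
  then show ?thesis using nz c r \<open>r mod (r - a) < r - a\<close> unfolding adm_def by auto
qed

lemma adm_R:
  assumes "adm r a" "\<not> tbase r a"
  shows "adm a ((- r) mod a)"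
proof -
  have r: "1 < r" "1 < a" "a < r - 1" "coprime r a" using assms unfolding adm_def by auto
  have c: "coprime a ((- r) mod a)"
    using r coprime_mod_right_iff[of a "- r"] coprime_minus_right_iff[of a r]
    by (simp add: coprime_commute)
  have nz: "(- r) mod a \<noteq> 0"
  proof
    assume "(- r) mod a = 0"
    then have "coprime a 0" using c by simp
    then show False using r by simp
  qed
  have "0 \<le> (- r) mod a" "(- r) mod a < a" using r by auto
  then have "0 < (- r) mod a" using nz by linarith
  then show ?thesis using nz c r \<open>(- r) mod a < a\<close> unfolding adm_def by auto
qed

lemma tau_range: "adm r a \<Longrightarrow> 0 \<le> i \<Longrightarrow> i < r \<Longrightarrow> 0 \<le> tau r a i \<and> tau r a i < r"
proof (induction r a i rule: tau.induct)
  case (1 r a i)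
  show ?case
  proof (cases "tbase r a")
    case True
    then show ?thesis using 1(3) tau_base[OF True, of i] unfolding adm_def by auto
  next
    case nb: False
    show ?thesis
    proof (cases "a \<le> i")
      case True
      have "0 \<le> i mod (r - a)" "i mod (r - a) < r - a" using 1(3) unfolding adm_def by auto
      then have "0 \<le> tau (r - a) (r mod (r - a)) (i mod (r - a)) \<and> tau (r - a) (r mod (r - a)) (i mod (r - a)) < r - a"
        using 1(1)[OF nb True adm_L[OF 1(3) nb]] by blast
      then show ?thesis using tau_L[OF nb True] 1(3) unfolding adm_def by auto
    next
      case False
      have "0 \<le> tau a ((- r) mod a) i \<and> tau a ((- r) mod a) i < a"
        using 1(2)[OF nb False adm_R[OF 1(3) nb]] 1(4) False by auto
      then show ?thesis using tau_R[OF nb False] 1(3) unfolding adm_def by auto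
    qed
  qed
qed

lemma cl_0: "0 < r \<Longrightarrow> -r < n \<Longrightarrow> n \<le> 0 \<Longrightarrow> cl r n = 0"
proof -
  assume r: "0 < r" "-r < n" "n \<le> 0"
  have "cl r n \<le> 0" using cl_le_iff[OF r(1), of n 0] r by simp
  moreover have "\<not> cl r n \<le> -1" using cl_le_iff[OF r(1), of n "-1"] r by simp
  ultimately show ?thesis by simp
qed

lemma cl_1: "0 < r \<Longrightarrow> 0 < n \<Longrightarrow> n \<le> r \<Longrightarrow> cl r n = 1"
proof -
  assume r: "0 < r" "0 < n" "n \<le> r"
  have "cl r n \<le> 1" using cl_le_iff[OF r(1), of n 1] r by simp
  moreover have "\<not> cl r n \<le> 0" using cl_le_iff[OF r(1), of n 0] r by simp
  ultimately show ?thesis by simp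
qed

lemma rmod_eq: "0 < (a::int) \<Longrightarrow> a < r \<Longrightarrow> r mod (r - a) = a mod (r - a)"
proof -
  have "r mod (r - a) = (a + (r - a)) mod (r - a)" by simp
  also have "\<dots> = a mod (r - a)" by (rule mod_add_self2)
  finally show ?thesis .
qed

lemma chi_L:
  assumes "0 < a" "a < r" "a * b - q * r = 1" "1 \<le> x" "x \<le> r - 1"
  shows "chi r b x = chi (r - a) (b - q) x"
  unfolding chi_def using EL[OF assms(1,2,3), of x] EL[OF assms(1,2,3), of "x - 1"] assms by simp

lemma chi_R:
  assumes "0 < a" "a < r" "a * b - q * r = 1" "2 - r \<le> y" "y \<le> a - 1"
  shows "chi r b y = chi a q y"
  unfolding chi_def using ER[OF assms(1,2,3), of y] ER[OF assms(1,2,3), of "y - 1"] assms by simp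

lemma tau_inj: "adm r a \<Longrightarrow> 0 \<le> i \<Longrightarrow> i < r \<Longrightarrow> (\<forall>j. 0 \<le> j \<longrightarrow> j < r \<longrightarrow> tau r a i = tau r a j \<longrightarrow> i = j)"
proof (induction r a i rule: tau.induct)
  case (1 r a i)
  have r: "1 < r" "0 < a" "a < r" "coprime r a" using 1(3) unfolding adm_def by auto
  show ?case
  proof (intro allI impI)
    fix j assume j: "0 \<le> j" "j < r" "tau r a i = tau r a j"
    show "i = j"
    proof (cases "tbase r a")
      case True
      then have "(a * i - 1) mod r = (a * j - 1) mod r" using j tau_base by metis
      then have "[a * i - 1 = a * j - 1] (mod r)" by (simp add: cong_def)
      then have "[a * i = a * j] (mod r)" by (metis cong_add_rcancel diff_add_cancel)
      then have "[i = j] (mod r)" using r(4) by (metis cong_mult_lcancel coprime_commute)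
      then show "i = j" using 1(4,5) j(1,2) by (simp add: cong_def)
    next
      case nb: False
      have rL: "0 \<le> tau (r - a) (r mod (r - a)) (k mod (r - a)) \<and> tau (r - a) (r mod (r - a)) (k mod (r - a)) < r - a" for k
        using tau_range[OF adm_L[OF 1(3) nb], of "k mod (r - a)"] r by simp
      have rR: "0 \<le> k \<Longrightarrow> k < a \<Longrightarrow> 0 \<le> tau a ((- r) mod a) k \<and> tau a ((- r) mod a) k < a" for k
        using tau_range[OF adm_R[OF 1(3) nb], of k] by simp
      show ?thesis
      proof (cases "a \<le> i")
        case ai: True
        show ?thesis
        proof (cases "a \<le> j")
          case aj: True
          have "tau (r - a) (r mod (r - a)) (i mod (r - a)) = tau (r - a) (r mod (r - a)) (j mod (r - a))"
            using j(3) tau_L[OF nb ai] tau_L[OF nb aj] by simp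
          then have "i mod (r - a) = j mod (r - a)"
            using 1(1)[OF nb ai adm_L[OF 1(3) nb]] r by simp
          then have "[i = j] (mod (r - a))" by (simp add: cong_def)
          then have "(r - a) dvd (i - j)" by (simp add: cong_iff_dvd_diff)
          moreover have "-(r - a) < i - j" "i - j < r - a" using ai aj 1(5) j(2) by auto
          moreover obtain k where k: "i - j = (r - a) * k" using calculation(1) by (auto elim: dvdE)
          ultimately have "k = 0"
          proof -
            have "\<not> 1 \<le> k"
            proof
              assume "1 \<le> k" then have "(r - a) * 1 \<le> (r - a) * k" using r by (intro mult_left_mono) auto
              then show False using k \<open>i - j < r - a\<close> by simp
            qed
            moreover have "\<not> k \<le> -1"
            proof
              assume "k \<le> -1" then have "(r - a) * k \<le> (r - a) * (-1)" using r by (intro mult_left_mono) auto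
              then show False using k \<open>-(r - a) < i - j\<close> by simp
            qed
            ultimately show ?thesis by simp
          qed
          then show ?thesis using k by simp
        next
          case aj: False
          then show ?thesis using j(3) tau_L[OF nb ai] tau_R[OF nb aj] rL[of i] rR[of j] j(1) aj by auto
        qed
      next
        case ai: False
        show ?thesis
        proof (cases "a \<le> j")
          case aj: True
          then show ?thesis using j(3) tau_L[OF nb aj] tau_R[OF nb ai] rL[of j] rR[of i] 1(4) ai by auto
        next
          case aj: False
          have "tau a ((- r) mod a) i = tau a ((- r) mod a) j"
            using j(3) tau_R[OF nb ai] tau_R[OF nb aj] by simp
          then show ?thesis using 1(2)[OF nb ai adm_R[OF 1(3) nb]] 1(4) ai aj j(1) by auto
        qed
      qed
    qed
  qed
qed

lemma G: "adm r a \<Longrightarrow> 0 \<le> i \<Longrightarrow> i < r \<Longrightarrow> 0 < b \<Longrightarrow> b < r \<Longrightarrow> (a * b) mod r = 1 \<Longrightarrow>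
  chi r b (tau r a i + 1) = chi r b i"
proof (induction r a i arbitrary: b rule: tau.induct)
  case (1 r a i)
  have r: "1 < r" "0 < a" "a < r" "coprime r a" using 1(3) unfolding adm_def by auto
  show ?case
  proof (cases "tbase r a")
    case True
    then have "a = 1 \<or> a = r - 1" using r by auto
    then show ?thesis
    proof
      assume a1: "a = 1"
      have "chi r b (tau r a i + 1) = chi r b ((tau r a i + 1) mod r)" using chi_mod r by simp
      also have "(tau r a i + 1) mod r = i mod r"
        using tau_base[OF True] a1 by (simp add: mod_add_left_eq)
      also have "chi r b (i mod r) = chi r b i" using chi_mod r by simp
      finally show ?thesis .
    next
      assume a1: "a = r - 1"
      have "(r * b - b) mod r = (- b) mod r"
      proof -
        have "(r * b - b) mod r = (- b + b * r) mod r" by (simp add: algebra_simps)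
        also have "\<dots> = (- b) mod r" by (rule mod_mult_self1)
        finally show ?thesis .
      qed
      moreover have "(- b) mod r = r - b"
      proof -
        have "- b = (r - b) + (-1) * r" by simp
        then have "(- b) mod r = ((r - b) + (-1) * r) mod r" by simp
        also have "\<dots> = (r - b) mod r" by (rule mod_mult_self1)
        also have "\<dots> = r - b" using 1(6,7) by (intro mod_pos_pos_trivial) auto
        finally show ?thesis .
      qed
      ultimately have "r - b = 1" using 1(8) a1 by (simp add: algebra_simps)
      then have bb: "b = r - 1" by simp
      have "chi r b (tau r a i + 1) = chi r b ((tau r a i + 1) mod r)" using chi_mod r by simp
      also have "(tau r a i + 1) mod r = ((- i) + i * r) mod r"
      proof -
        have t: "tau r a i = ((r - 1) * i - 1) mod r" using tau_base[OF True] a1 by simp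
        have "(tau r a i + 1) mod r = ((r - 1) * i - 1 + 1) mod r" unfolding t by (rule mod_add_left_eq)
        also have "\<dots> = ((- i) + i * r) mod r" by (rule arg_cong[where f="\<lambda>x. x mod r"]) (simp add: algebra_simps)
        finally show ?thesis .
      qed
      also have "\<dots> = (- i) mod r" by (rule mod_mult_self1)
      also have "chi r b ((- i) mod r) = chi r b (- i)" using chi_mod r by simp
      finally have e: "chi r b (tau r a i + 1) = chi r b (- i)" .
      have cf: "chi r b x = cl r (- x) - cl r (1 - x) + 1" for x
      proof -
        have 1: "x * b = - x + x * r" unfolding bb by (simp add: algebra_simps)
        have 2: "(x - 1) * b = (1 - x) + (x - 1) * r" unfolding bb by (simp add: algebra_simps)
        show ?thesis unfolding chi_def 1 2 cl_add[OF order.strict_trans[OF zero_less_one r(1)]] by simp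
      qed
      show ?thesis
      proof (cases "i = 0")
        case True then show ?thesis using e by simp
      next
        case False
        then have i: "1 \<le> i" "i \<le> r - 1" using 1(4,5) by auto
        have "chi r b (- i) = 1" unfolding cf using cl_1[of r i] cl_1[of r "1 + i"] i by simp
        moreover have "chi r b i = 1" unfolding cf using cl_0[of r "- i"] cl_0[of r "1 - i"] i by simp
        ultimately show ?thesis using e by simp
      qed
    qed
  next
    case nb: False
    have a2: "1 < a" "a < r - 1" using r nb by auto
    define q where "q = (a * b) div r"
    have H: "a * b - q * r = 1"
    proof -
      have "r * q + (a * b) mod r = a * b" unfolding q_def by simp
      then show ?thesis using 1(8) by (simp add: algebra_simps)
    qed
    have ab: "a * b \<le> r * b" using r 1(6) by (intro mult_right_mono) auto
    have q1: "q < b"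
    proof -
      have "q * r < b * r" using H ab by (simp add: algebra_simps)
      then show ?thesis using r by simp
    qed
    have q2: "0 < q"
    proof -
      have "2 * 1 \<le> a * b" using a2 1(6) by (intro mult_mono) auto
      then have "0 < q * r" using H by simp
      then show ?thesis using r(1) zero_less_mult_pos2[of q r] by simp
    qed
    have q3: "q < a"
    proof -
      have "a * b < a * r" using r 1(7) by simp
      then have "q * r < a * r" using H by simp
      then show ?thesis using r by simp
    qed
    have q4: "b - q < r - a"
    proof -
      have "(r - a) * b \<le> (r - a) * (r - 1)" using r 1(7) by (intro mult_left_mono) auto
      then have "r * (b - q) < r * (r - a)" using H a2 by (simp add: algebra_simps)
      then show ?thesis using r by simp
    qed
    show ?thesis
    proof (cases "a \<le> i")
      case ai: True
      define y where "y = i mod (r - a)"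
      have y: "0 \<le> y" "y < r - a" using r a2 unfolding y_def by auto
      have HL: "(r mod (r - a) * (b - q)) mod (r - a) = 1"
      proof -
        have "(r mod (r - a) * (b - q)) mod (r - a) = (a mod (r - a) * (b - q)) mod (r - a)"
          using rmod_eq r by simp
        also have "\<dots> = (a * (b - q)) mod (r - a)" by (simp add: mod_mult_left_eq)
        also have "a * (b - q) = 1 + q * (r - a)" using H by (simp add: algebra_simps)
        also have "(1 + q * (r - a)) mod (r - a) = 1 mod (r - a)" by simp
        also have "\<dots> = 1" using a2 by simp
        finally show ?thesis .
      qed
      have IH: "chi (r - a) (b - q) (tau (r - a) (r mod (r - a)) y + 1) = chi (r - a) (b - q) y"
        using 1(1)[OF nb ai adm_L[OF 1(3) nb] _ _ _ _ HL] y q1 q4 unfolding y_def by simp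
      have tr: "0 \<le> tau (r - a) (r mod (r - a)) y \<and> tau (r - a) (r mod (r - a)) y < r - a"
        using tau_range[OF adm_L[OF 1(3) nb]] y by simp
      have "chi r b (tau r a i + 1) = chi r b (tau (r - a) (r mod (r - a)) y + 1)"
        using tau_L[OF nb ai] y_def by simp
      also have "\<dots> = chi (r - a) (b - q) (tau (r - a) (r mod (r - a)) y + 1)"
        using chi_L[OF r(2,3) H, of "tau (r - a) (r mod (r - a)) y + 1"] tr r by simp
      also have "\<dots> = chi (r - a) (b - q) y" by (rule IH)
      also have "\<dots> = chi (r - a) (b - q) i" unfolding y_def using chi_mod r by simp
      also have "\<dots> = chi r b i" using chi_L[OF r(2,3) H, of i] ai 1(5) r by simp
      finally show ?thesis .
    next
      case ai: False
      have HR: "((- r) mod a * q) mod a = 1"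
      proof -
        have "((- r) mod a * q) mod a = ((- r) * q) mod a" by (simp add: mod_mult_left_eq)
        also have "(- r) * q = 1 + (- b) * a" using H by (simp add: algebra_simps)
        also have "(1 + (- b) * a) mod a = 1 mod a" by (rule mod_mult_self1)
        also have "\<dots> = 1" using a2 by simp
        finally show ?thesis .
      qed
      define t where "t = tau a ((- r) mod a) i"
      have IH: "chi a q (t + 1) = chi a q i"
        using 1(2)[OF nb ai adm_R[OF 1(3) nb] _ _ _ _ HR] 1(4) ai q2 q3 unfolding t_def by simp
      have tr: "0 \<le> t" "t < a"
        using tau_range[OF adm_R[OF 1(3) nb], of i] 1(4) ai unfolding t_def by auto
      have "chi r b (tau r a i + 1) = chi r b ((t + 1 - a) + 1 * r)"
      proof -
        have "tau r a i + 1 = (t + 1 - a) + 1 * r" using tau_R[OF nb ai] t_def by simp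
        then show ?thesis by (metis)
      qed
      also have "\<dots> = chi r b (t + 1 - a)" using chi_per[of r b "t + 1 - a" 1] r by simp
      also have "\<dots> = chi a q (t + 1 - a)" using chi_R[OF r(2,3) H] tr a2 by simp
      also have "\<dots> = chi a q ((t + 1) + (-1) * a)" by simp
      also have "\<dots> = chi a q (t + 1)" using chi_per r by blast
      also have "\<dots> = chi a q i" by (rule IH)
      also have "\<dots> = chi r b i" using chi_R[OF r(2,3) H, of i] ai 1(4) a2 by simp
      finally show ?thesis .
    qed
  qed
qed

lemma chi_modform:
  assumes b: "0 < b" "b < r"
  shows "chi r b x = (if 1 \<le> (x * b) mod r \<and> (x * b) mod r \<le> b then 1 else 0)"
proof -
  have r: "0 < r" using b by simp
  define s where "s = ((x - 1) * b) mod r"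
  define Q where "Q = ((x - 1) * b) div r"
  have e1: "(x - 1) * b = s + Q * r" unfolding s_def Q_def by simp
  have e2: "x * b = (s + b) + Q * r" using e1 by (simp add: algebra_simps)
  have s: "0 \<le> s" "s < r" using r unfolding s_def by auto
  have chi: "chi r b x = cl r (s + b) - cl r s" unfolding chi_def e1 e2 cl_add[OF r] by simp
  have m: "(x * b) mod r = (s + b) mod r" unfolding e2 by simp
  show ?thesis
  proof (cases "s = 0")
    case True
    then show ?thesis using chi m cl_0[OF r, of 0] cl_1[OF r, of b] b by simp
  next
    case s0: False
    then have cs: "cl r s = 1" using cl_1[OF r, of s] s by simp
    show ?thesis
    proof (cases "s + b \<le> r")
      case True
      have "cl r (s + b) = 1" using cl_1[OF r, of "s + b"] True s b by simp
      moreover have "\<not> (1 \<le> (s + b) mod r \<and> (s + b) mod r \<le> b)"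
      proof (cases "s + b = r")
        case True then show ?thesis by simp
      next
        case False
        then have "(s + b) mod r = s + b" using True s b by (intro mod_pos_pos_trivial) auto
        then show ?thesis using s0 s by simp
      qed
      ultimately show ?thesis using chi cs m by simp
    next
      case False
      have "cl r (s + b) = cl r ((s + b - r) + 1 * r)" by simp
      also have "\<dots> = cl r (s + b - r) + 1" by (rule cl_add[OF r])
      also have "cl r (s + b - r) = 1" using cl_1[OF r, of "s + b - r"] False s b by simp
      finally have c2: "cl r (s + b) = 2" by simp
      have "(s + b) mod r = ((s + b - r) + 1 * r) mod r" by simp
      also have "\<dots> = (s + b - r) mod r" by (rule mod_mult_self1)
      also have "\<dots> = s + b - r" using False s b by (intro mod_pos_pos_trivial) auto
      finally have "(s + b) mod r = s + b - r" .
      then show ?thesis using chi cs c2 m False s b by simp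
    qed
  qed
qed

lemma chi_01: "0 < b \<Longrightarrow> b < r \<Longrightarrow> chi r b x = 0 \<or> chi r b x = 1"
  using chi_modform by simp

lemma tau_bij: "adm r a \<Longrightarrow> bij_betw (tau r a) {0..<r} {0..<r}"
proof -
  assume ad: "adm r a"
  have inj: "inj_on (tau r a) {0..<r}"
    unfolding inj_on_def using tau_inj[OF ad] by auto
  have sub: "tau r a ` {0..<r} \<subseteq> {0..<r}" using tau_range[OF ad] by auto
  have "tau r a ` {0..<r} = {0..<r}" using endo_inj_surj[OF _ sub inj] by simp
  then show ?thesis using inj unfolding bij_betw_def by simp
qed

lemma telescope:
  assumes r: "0 < r"
  shows "0 \<le> k \<Longrightarrow> (\<Sum>j\<in>{0..<k}. chi r b (j + 1)) = cl r (k * b)"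
proof (induction k rule: int_ge_induct)
  case base
  then show ?case using cl_0[of r 0] r by simp
next
  case (step k)
  have "{0..<k + 1} = insert k {0..<k}" using step.hyps by auto
  then have "(\<Sum>j\<in>{0..<k + 1}. chi r b (j + 1)) = chi r b (k + 1) + (\<Sum>j\<in>{0..<k}. chi r b (j + 1))"
    by simp
  also have "\<dots> = cl r ((k + 1) * b)" using step.IH unfolding chi_def by simp
  finally show ?case .
qed

lemma count:
  assumes ad: "adm r a" and b: "0 < b" "b < r" "(a * b) mod r = 1" and k: "0 \<le> k" "k \<le> r"
  shows "(\<Sum>m\<in>{1..b}. (if tau r a ((m * a) mod r) < k then 1 else 0 :: int)) = cl r (k * b)"
proof -
  have r: "0 < r" using b by simp
  define f where "f x = (if tau r a x < k then 1 else 0 :: int)" for x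
  define T where "T = {x\<in>{0..<r}. chi r b x = 1}"
  have s1: "(\<Sum>m\<in>{1..b}. f ((m * a) mod r)) = (\<Sum>x\<in>T. f x)"
  proof (rule sum.reindex_bij_witness[where j = "\<lambda>m. (m * a) mod r" and i = "\<lambda>x. (x * b) mod r"])
    fix m assume m: "m \<in> {1..b}"
    have "((m * a) mod r * b) mod r = (m * (a * b)) mod r" by (simp add: mod_mult_left_eq mult.assoc)
    also have "\<dots> = (m * ((a * b) mod r)) mod r" by (simp add: mod_mult_right_eq)
    also have "\<dots> = m" using m b by (simp add: mod_pos_pos_trivial)
    finally show "((m * a) mod r * b) mod r = m" .
    then show "(m * a) mod r \<in> T" unfolding T_def using chi_modform[OF b(1,2), of "(m * a) mod r"] m r by simp
  next
    fix x assume x: "x \<in> T"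
    then have x0: "0 \<le> x" "x < r" "chi r b x = 1" unfolding T_def by auto
    have "((x * b) mod r * a) mod r = (x * b * a) mod r" by (rule mod_mult_left_eq)
    also have "(x * b * a) mod r = (x * (a * b)) mod r" by (simp add: ac_simps)
    also have "\<dots> = (x * ((a * b) mod r)) mod r" by (simp add: mod_mult_right_eq)
    also have "\<dots> = x" using x0 b by (simp add: mod_pos_pos_trivial)
    finally show "((x * b) mod r * a) mod r = x" .
    show "(x * b) mod r \<in> {1..b}" using chi_modform[OF b(1,2), of x] x0 by (auto split: if_splits)
  next
    fix m show "f ((m * a) mod r) = f ((m * a) mod r)" by simp
  qed
  have s2: "(\<Sum>x\<in>T. f x) = (\<Sum>x\<in>{0..<r}. chi r b x * f x)"
  proof -
    have "(\<Sum>x\<in>T. f x) = (\<Sum>x\<in>{0..<r}. if chi r b x = 1 then f x else 0)"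
      unfolding T_def by (rule sum.inter_filter) simp
    also have "\<dots> = (\<Sum>x\<in>{0..<r}. chi r b x * f x)"
      by (rule sum.cong) (use chi_01[OF b(1,2)] in auto)
    finally show ?thesis .
  qed
  have s3: "(\<Sum>x\<in>{0..<r}. chi r b x * f x) = (\<Sum>x\<in>{0..<r}. chi r b (tau r a x + 1) * f x)"
    by (rule sum.cong) (use G[OF ad _ _ b] in auto)
  have s4: "(\<Sum>x\<in>{0..<r}. chi r b (tau r a x + 1) * f x) = (\<Sum>j\<in>{0..<r}. chi r b (j + 1) * (if j < k then 1 else 0))"
    unfolding f_def using sum.reindex_bij_betw[OF tau_bij[OF ad], of "\<lambda>j. chi r b (j + 1) * (if j < k then 1 else 0)"]
    by simp
  have s5: "(\<Sum>j\<in>{0..<r}. chi r b (j + 1) * (if j < k then 1 else 0)) = (\<Sum>j\<in>{0..<k}. chi r b (j + 1))"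
  proof -
    have "(\<Sum>j\<in>{0..<r}. chi r b (j + 1) * (if j < k then 1 else 0)) = (\<Sum>j\<in>{0..<r}. if j < k then chi r b (j + 1) else 0)"
      by (rule sum.cong) auto
    also have "\<dots> = (\<Sum>j\<in>{j\<in>{0..<r}. j < k}. chi r b (j + 1))"
      by (rule sum.inter_filter[symmetric]) simp
    also have "{j\<in>{0..<r}. j < k} = {0..<k}" using k by auto
    finally show ?thesis .
  qed
  show ?thesis using s1 s2 s3 s4 s5 telescope[OF r k(1)] unfolding f_def by simp
qed

lemma mult_inv_mod:
  fixes r a b m :: int
  assumes "0 < r" "(a * b) mod r = 1" "0 \<le> m" "m < r"
  shows "((m * a) mod r * b) mod r = m"
proof -
  have "((m * a) mod r * b) mod r = (m * a * b) mod r" by (rule mod_mult_left_eq)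
  also have "\<dots> = (m * (a * b)) mod r" by (simp add: ac_simps)
  also have "\<dots> = (m * ((a * b) mod r)) mod r" by (simp add: mod_mult_right_eq)
  also have "\<dots> = m" using assms by (simp add: mod_pos_pos_trivial)
  finally show ?thesis .
qed

lemma mult_inv_mod': "0 < (r::int) \<Longrightarrow> (a * b) mod r = 1 \<Longrightarrow> (((i * b) mod r) * a) mod r = i mod r"
proof -
  assume r: "0 < r" "(a * b) mod r = 1"
  have "(((i * b) mod r) * a) mod r = (i * b * a) mod r" by (rule mod_mult_left_eq)
  also have "\<dots> = (i * (a * b)) mod r" by (simp add: ac_simps)
  also have "\<dots> = (i * ((a * b) mod r)) mod r" by (simp add: mod_mult_right_eq)
  also have "\<dots> = i mod r" using r by simp
  finally show ?thesis .
qed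

lemma sum_mult_reindex:
  fixes g :: "int \<Rightarrow> 'b::comm_monoid_add"
  assumes r: "0 < (r::int)" and ab: "(a * b) mod r = 1"
  shows "(\<Sum>m\<in>{0..<r}. g ((m * a) mod r)) = (\<Sum>x\<in>{0..<r}. g x)"
proof (rule sum.reindex_bij_witness[where j = "\<lambda>m. (m * a) mod r" and i = "\<lambda>x. (x * b) mod r"])
  fix m assume "m \<in> {0..<r}"
  then show "((m * a) mod r * b) mod r = m" using mult_inv_mod[OF r ab] by simp
  show "(m * a) mod r \<in> {0..<r}" using r by simp
next
  fix x assume x: "x \<in> {0..<r}"
  show "((x * b) mod r * a) mod r = x" using mult_inv_mod'[OF r ab, of x] x by simp
  show "(x * b) mod r \<in> {0..<r}" using r by simp
qed simp

lemma cyc_unique: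
  fixes f :: "int \<Rightarrow> 'b" and r a b :: int
  assumes r: "0 < r" and ab: "(a * b) mod r = 1"
    and per: "\<And>i. f i = f (i mod r)" and st: "\<And>i. f i = f (i - a)"
  shows "f i = f 0"
proof -
  have mf: "f (int n * a) = f 0" for n
  proof (induction n)
    case 0 then show ?case by simp
  next
    case (Suc n)
    have "f (int (Suc n) * a) = f (int (Suc n) * a - a)" by (rule st)
    also have "int (Suc n) * a - a = int n * a" by (simp add: algebra_simps)
    finally show ?case using Suc by simp
  qed
  define n where "n = nat ((i * b) mod r)"
  have "int n = (i * b) mod r" unfolding n_def using r by simp
  then have "(int n * a) mod r = i mod r" using mult_inv_mod'[OF r ab, of i] by simp
  then have "f i = f (int n * a)" using per[of i] per[of "int n * a"] by simp
  then show ?thesis using mf by simp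
qed

lemma cyc_exist:
  fixes g :: "int \<Rightarrow> 'b::ab_group_add" and c :: 'b and r a b :: int
  assumes r: "0 < r" and b: "0 < b" "b < r" and ab: "(a * b) mod r = 1"
    and gper: "\<And>i. g i = g (i mod r)" and gsum: "(\<Sum>x\<in>{0..<r}. g x) = 0"
  defines "F \<equiv> \<lambda>i. c + (\<Sum>m\<in>{1..(i * b) mod r}. g (m * a))"
  shows "F i = F (i mod r)" "F 0 = c" "F i - F (i - a) = g i"
proof -
  show "F i = F (i mod r)" unfolding F_def by (simp add: mod_mult_left_eq)
  show "F 0 = c" unfolding F_def by simp
  define n where "n = (i * b) mod r"
  have n: "0 \<le> n" "n < r" using r unfolding n_def by auto
  have n': "((i - a) * b) mod r = (n - 1) mod r"
  proof -
    have "((i - a) * b) mod r = (i * b - a * b) mod r" by (simp add: algebra_simps)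
    also have "\<dots> = ((i * b) mod r - (a * b) mod r) mod r" by (simp add: mod_diff_eq)
    finally show ?thesis using ab unfolding n_def by simp
  qed
  have gma: "g (m * a) = g ((m * a) mod r)" for m by (rule gper)
  show "F i - F (i - a) = g i"
  proof (cases "n = 0")
    case False
    then have n1: "((i - a) * b) mod r = n - 1" using n' n by (simp add: mod_pos_pos_trivial)
    have "{1..n} = insert n {1..n - 1}" using False n by auto
    then have "(\<Sum>m\<in>{1..n}. g (m * a)) = g (n * a) + (\<Sum>m\<in>{1..n - 1}. g (m * a))" by simp
    moreover have "g (n * a) = g i"
      using gma[of n] mult_inv_mod'[OF r ab, of i] gper[of i] unfolding n_def by simp
    ultimately show ?thesis unfolding F_def using n1 unfolding n_def by simp
  next
    case True
    then have n1: "((i - a) * b) mod r = r - 1" using n' r by (simp add: zmod_minus1)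
    have "(\<Sum>m\<in>{0..<r}. g ((m * a) mod r)) = 0" using sum_mult_reindex[OF r ab, where g=g] gsum by simp
    moreover have "(\<Sum>m\<in>{0..<r}. g ((m * a) mod r)) = g 0 + (\<Sum>m\<in>{1..r - 1}. g (m * a))"
    proof -
      have "{0..<r} = insert 0 {1..r - 1}" using r by auto
      then have "(\<Sum>m\<in>{0..<r}. g ((m * a) mod r)) = g 0 + (\<Sum>m\<in>{1..r - 1}. g ((m * a) mod r))" by simp
      also have "(\<Sum>m\<in>{1..r - 1}. g ((m * a) mod r)) = (\<Sum>m\<in>{1..r - 1}. g (m * a))"
        by (intro sum.cong refl) (rule gma[symmetric])
      finally show ?thesis .
    qed
    moreover have "g i = g 0"
    proof -
      have "i mod r = 0" using mult_inv_mod'[OF r ab, of i] True unfolding n_def by simp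
      then show ?thesis using gper[of i] by simp
    qed
    ultimately have "g 0 + (\<Sum>m\<in>{1..r - 1}. g (m * a)) = 0" by simp
    then have gi: "g i = - (\<Sum>m\<in>{1..r - 1}. g (m * a))" using \<open>g i = g 0\<close> by (simp add: eq_neg_iff_add_eq_0)
    have "F i = c" unfolding F_def using True unfolding n_def by simp
    moreover have "F (i - a) = c + (\<Sum>m\<in>{1..r - 1}. g (m * a))" unfolding F_def n1 by simp
    ultimately show ?thesis using gi by simp
  qed
qed

lemma sum_fun_apply: "(\<Sum>x\<in>A. f x) \<rho> = (\<Sum>x\<in>A. f x \<rho>)"
proof (cases "finite A")
  case True
  then show ?thesis by (induction A rule: finite_induct) auto
next
  case False
  then show ?thesis by simp
qed

lemma sum_ifk: "finite S \<Longrightarrow> (\<Sum>x\<in>S. (f x :: rat) * (if k = x then 1 else 0) / c) = (if k \<in> S then f k / c else 0)"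
proof -
  assume S: "finite S"
  have "(\<Sum>x\<in>S. f x * (if k = x then 1 else 0) / c) = (\<Sum>x\<in>S. if k = x then f x / c else 0)"
    by (rule sum.cong) auto
  also have "\<dots> = (if k \<in> S then f k / c else 0)" using S by (simp add: sum.delta)
  finally show ?thesis .
qed

lemma Zdiv_apply:
  "Zdiv r a i RE1 = 0"
  "Zdiv r a i (RD k) = (if tau r a (i mod r) + 1 \<le> k \<and> k \<le> r then 1 else 0)"
  unfolding Zdiv_def sum_fun_apply prime_div_def by auto

lemma DZ_apply:
  "DZdiv r a RE1 = 0"
  "DZdiv r a (RD k) = (if 0 \<le> k \<and> k \<le> r then of_int k / of_int r else 0)"
  unfolding DZdiv_def sum_fun_apply prime_div_def smul_def e3star_def pt_def
  using sum_ifk[of "{0..r}" "\<lambda>x. of_int x" k "of_int r"] by auto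

lemma DX_apply:
  "DXdiv r a RE1 = 1"
  "DXdiv r a (RD k) = (if 0 \<le> k \<and> k \<le> r then of_int ((- k * binv r a) mod r) / of_int r else 0)"
  unfolding DXdiv_def sum_fun_apply prime_div_def smul_def e1star_def pt_def
  using sum_ifk[of "{0..r}" "\<lambda>x. of_int ((- x * binv r a) mod r)" k "of_int r"] by auto

lemma qdiv_diff: "qdiv_of (X - Y) = qdiv_of X - qdiv_of Y"
  unfolding qdiv_of_def by auto

lemma qdiv_E1: "qdiv_of E1 = E1"
  unfolding qdiv_of_def prime_div_def by auto

lemma Zper: "Zdiv r a i = Zdiv r a (i mod r)"
  unfolding Zdiv_def by simp

lemma cl_frac: "0 < r \<Longrightarrow> (of_int (cl r n) :: rat) - of_int n / of_int r = of_int ((- n) mod r) / of_int r"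
proof -
  assume r: "0 < r"
  have e: "(- n) mod r = - n + r * cl r n" unfolding cl_def
    using div_mult_mod_eq[of "- n" r] by (simp add: algebra_simps)
  have "(of_int r :: rat) \<noteq> 0" using r by simp
  then show ?thesis unfolding e by (simp add: field_simps)
qed

lemma hlp1: "x - y = z - w \<Longrightarrow> (z::'a::ab_group_add) = w + x - y"
  by (simp add: algebra_simps)
lemma hlp3: "x - y = z - w \<Longrightarrow> (x::'a::ab_group_add) + w = z + y"
  by (simp add: algebra_simps)
lemma hlp0: "(x::'a::ab_group_add) - y = x' - y' \<Longrightarrow> x' - x = y' - y"
proof -
  assume h: "x - y = x' - y'"
  have "(x' - x) - (y' - y) = (x' - y') - (x - y)" by (simp add: algebra_simps)
  also have "\<dots> = 0" using h by simp
  finally show ?thesis by simp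
qed
lemma hlp2: "(z::'a::ab_group_add) = w + x' - y' \<Longrightarrow> x - y = z - w \<Longrightarrow> x' - x = y' - y"
proof -
  assume a: "z = w + x' - y'" "x - y = z - w"
  have "x - y = z - w" by (rule a(2))
  also have "z - w = x' - y'" unfolding a(1) by (simp add: algebra_simps)
  finally show ?thesis by (rule hlp0)
qed
lemma hlp4: "(x'::'a::ab_group_add) + w = z + y' \<Longrightarrow> x - y = z - w \<Longrightarrow> x' - x = y' - y"
proof -
  assume a: "x' + w = z + y'" "x - y = z - w"
  have z: "z = x' + w - y'" using a(1) by (simp add: algebra_simps)
  have "x - y = z - w" by (rule a(2))
  also have "z - w = x' - y'" unfolding z by (simp add: algebra_simps)
  finally show ?thesis by (rule hlp0)
qed

lemma hlp5: "(x::'a::ab_group_add) - x1 = z - z1 \<Longrightarrow> y - y1 = z - c \<Longrightarrow> u - u1 = z1 - c \<Longrightarrow>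
   x - (d + y - u) = x1 - (d + y1 - u1)"
proof -
  assume a: "x - x1 = z - z1" "y - y1 = z - c" "u - u1 = z1 - c"
  have "(x - (d + y - u)) - (x1 - (d + y1 - u1)) = (x - x1) - (y - y1) + (u - u1)" by (simp add: algebra_simps)
  also have "\<dots> = (z - z1) - (z - c) + (z1 - c)" using a by simp
  also have "\<dots> = 0" by (simp add: algebra_simps)
  finally show ?thesis by simp
qed

theorem mainTheorem7:
  fixes r a :: int
  assumes "1 < r" and "0 < a" and "a < r" and "coprime r a"
  shows "\<forall>i\<in>{0..<r}. qdiv_of (Xdiv r a i) = DXdiv r a + Rdiv r a i - Rdiv r a ((i + 1) mod r)"
proof -
  have ad: "adm r a" using assms unfolding adm_def by auto
  have r0: "0 < r" using assms by simp
  have "\<exists>x. [a * x = 1] (mod r)" using cong_solve_coprime_int assms(4) by (simp add: coprime_commute)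
  then have binv: "[a * binv r a = 1] (mod r)" unfolding binv_def by (rule someI_ex)
  define b0 where "b0 = binv r a mod r"
  have ab: "(a * b0) mod r = 1"
  proof -
    have "(a * b0) mod r = (a * binv r a) mod r" unfolding b0_def by (simp add: mod_mult_right_eq)
    also have "\<dots> = 1 mod r" using binv by (simp add: cong_def)
    also have "\<dots> = 1" using assms by simp
    finally show ?thesis .
  qed
  have b0: "0 < b0" "b0 < r"
  proof -
    have "0 \<le> b0" "b0 < r" unfolding b0_def using r0 by auto
    moreover have "b0 \<noteq> 0" using ab by auto
    ultimately show "0 < b0" "b0 < r" by auto
  qed
  define gX where "gX i = Zdiv r a i - Zdiv r a (i + 1)" for i
  define gR where "gR i = qdiv_of (Zdiv r a i) - DZdiv r a" for i
  have Zp1: "Zdiv r a (i + 1) = Zdiv r a (i mod r + 1)" for i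
    using Zper[of r a "i + 1"] Zper[of r a "i mod r + 1"] by (simp add: mod_add_left_eq)
  have gXper: "gX i = gX (i mod r)" for i
    unfolding gX_def using Zper[of r a i] Zp1[of i] by simp
  have gRper: "gR i = gR (i mod r)" for i
    unfolding gR_def using Zper[of r a i] by simp
  have gXsum: "(\<Sum>x\<in>{0..<r}. gX x) = 0"
  proof -
    have "(\<Sum>x\<in>{0..<r}. Zdiv r a (x + 1)) = (\<Sum>y\<in>{0..<r}. Zdiv r a y)"
    proof (rule sum.reindex_bij_witness[where j = "\<lambda>x. (x + 1) mod r" and i = "\<lambda>y. (y - 1) mod r"])
      fix x assume x: "x \<in> {0..<r}"
      have "((x + 1) mod r - 1) mod r = (x + 1 - 1) mod r" by (simp add: mod_diff_left_eq)
      then show "((x + 1) mod r - 1) mod r = x" using x by simp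
      show "(x + 1) mod r \<in> {0..<r}" using r0 by simp
      show "Zdiv r a ((x + 1) mod r) = Zdiv r a (x + 1)" using Zper[of r a "x + 1"] by simp
    next
      fix y assume y: "y \<in> {0..<r}"
      have "((y - 1) mod r + 1) mod r = (y - 1 + 1) mod r" by (simp add: mod_add_left_eq)
      then show "((y - 1) mod r + 1) mod r = y" using y by simp
      show "(y - 1) mod r \<in> {0..<r}" using r0 by simp
    qed
    then show ?thesis unfolding gX_def by (simp add: sum_subtractf)
  qed
  have gRsum: "(\<Sum>x\<in>{0..<r}. gR x) = 0"
  proof
    fix \<rho>
    show "(\<Sum>x\<in>{0..<r}. gR x) \<rho> = 0 \<rho>"
    proof (cases \<rho>)
      case RE1
      then show ?thesis unfolding sum_fun_apply gR_def by (simp add: Zdiv_apply DZ_apply qdiv_of_def)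
    next
      case (RD k)
      have "(\<Sum>x\<in>{0..<r}. gR x) \<rho> = (\<Sum>x\<in>{0..<r}. of_int (Zdiv r a x (RD k)) - DZdiv r a (RD k))"
        unfolding sum_fun_apply gR_def RD by (simp add: qdiv_of_def)
      also have "\<dots> = of_int (\<Sum>x\<in>{0..<r}. Zdiv r a x (RD k)) - of_int r * DZdiv r a (RD k)"
        using r0 by (simp add: sum_subtractf)
      also have "\<dots> = 0"
      proof (cases "0 \<le> k \<and> k \<le> r")
        case True
        have "(\<Sum>x\<in>{0..<r}. Zdiv r a x (RD k)) = (\<Sum>x\<in>{0..<r}. (\<lambda>j. if j < k then 1 else 0) (tau r a x))"
          by (rule sum.cong) (auto simp: Zdiv_apply True)
        also have "\<dots> = (\<Sum>j\<in>{0..<r}. if j < k then 1 else 0)"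
          by (rule sum.reindex_bij_betw[OF tau_bij[OF ad]])
        also have "\<dots> = (\<Sum>j\<in>{j\<in>{0..<r}. j < k}. 1)" by (rule sum.inter_filter[symmetric]) simp
        also have "{j\<in>{0..<r}. j < k} = {0..<k}" using True by auto
        finally have "(\<Sum>x\<in>{0..<r}. Zdiv r a x (RD k)) = k" using True by simp
        then show ?thesis using True r0 by (simp add: DZ_apply)
      next
        case False
        have "(\<Sum>x\<in>{0..<r}. Zdiv r a x (RD k)) = 0"
        proof (rule sum.neutral, rule ballI)
          fix x assume x: "x \<in> {0..<r}"
          then have "0 \<le> tau r a x" using tau_range[OF ad, of x] by auto
          then show "Zdiv r a x (RD k) = 0" using False x by (auto simp: Zdiv_apply)
        qed
        then show ?thesis using False by (auto simp: DZ_apply)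
      qed
      finally show ?thesis by simp
    qed
  qed
  define Rf where "Rf \<equiv> \<lambda>i. (0::qdivisor) + (\<Sum>m\<in>{1..(i * b0) mod r}. gR (m * a))"
  define Xf where "Xf \<equiv> \<lambda>i. (E1::divisor) + (\<Sum>m\<in>{1..(i * b0) mod r}. gX (m * a))"
  have R1: "Rf i = Rf (i mod r)" for i
    unfolding Rf_def using cyc_exist(1)[OF r0 b0 ab gRper gRsum, where c=0 and i=i] by simp
  have R2: "Rf 0 = 0"
    unfolding Rf_def using cyc_exist(2)[OF r0 b0 ab gRper gRsum, where c=0] by simp
  have R3: "Rf i - Rf (i - a) = gR i" for i
    unfolding Rf_def using cyc_exist(3)[OF r0 b0 ab gRper gRsum, where c=0 and i=i] by simp
  have X1: "Xf i = Xf (i mod r)" for i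
    unfolding Xf_def using cyc_exist(1)[OF r0 b0 ab gXper gXsum, where c=E1 and i=i] by simp
  have X2: "Xf 0 = E1"
    unfolding Xf_def using cyc_exist(2)[OF r0 b0 ab gXper gXsum, where c=E1] by simp
  have X3: "Xf i - Xf (i - a) = gX i" for i
    unfolding Xf_def using cyc_exist(3)[OF r0 b0 ab gXper gXsum, where c=E1 and i=i] by simp
  note R = R1 R2 R3
  note X = X1 X2 X3
  have Rdiv_eq: "Rdiv r a = Rf"
    unfolding Rdiv_def
  proof (rule the_equality)
    show "(\<forall>i. Rf i = Rf (i mod r)) \<and> Rf 0 = 0 \<and> (\<forall>i. qdiv_of (Zdiv r a i) = DZdiv r a + Rf i - Rf (i - a))"
    proof (intro conjI allI)
      fix i show "Rf i = Rf (i mod r)" by (rule R1)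
    next
      show "Rf 0 = 0" by (rule R2)
    next
      fix i show "qdiv_of (Zdiv r a i) = DZdiv r a + Rf i - Rf (i - a)"
        using R3[of i] unfolding gR_def by (rule hlp1)
    qed
  next
    fix R' assume h: "(\<forall>i. R' i = R' (i mod r)) \<and> R' 0 = 0 \<and> (\<forall>i. qdiv_of (Zdiv r a i) = DZdiv r a + R' i - R' (i - a))"
    then have hp: "\<And>i. R' i = R' (i mod r)" and h0: "R' 0 = 0"
      and h3: "\<And>i. qdiv_of (Zdiv r a i) = DZdiv r a + R' i - R' (i - a)" by auto
    show "R' = Rf"
    proof
      fix i
      have "(\<lambda>i. R' i - Rf i) i = (\<lambda>i. R' i - Rf i) 0"
      proof (rule cyc_unique[OF r0 ab])
        fix i
        show "R' i - Rf i = R' (i mod r) - Rf (i mod r)" using hp[of i] R1[of i] by simp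
        show "R' i - Rf i = R' (i - a) - Rf (i - a)" using h3[of i] R3[of i] unfolding gR_def by (rule hlp2)
      qed
      then show "R' i = Rf i" using h0 R2 by simp
    qed
  qed
  have Xdiv_eq: "Xdiv r a = Xf"
    unfolding Xdiv_def
  proof (rule the_equality)
    show "(\<forall>i. Xf i = Xf (i mod r)) \<and> Xf 0 = E1 \<and> (\<forall>i. Xf i + Zdiv r a (i + 1) = Zdiv r a i + Xf (i - a))"
    proof (intro conjI allI)
      fix i show "Xf i = Xf (i mod r)" by (rule X1)
    next
      show "Xf 0 = E1" by (rule X2)
    next
      fix i show "Xf i + Zdiv r a (i + 1) = Zdiv r a i + Xf (i - a)"
        using X3[of i] unfolding gX_def by (rule hlp3)
    qed
  next
    fix X' assume h: "(\<forall>i. X' i = X' (i mod r)) \<and> X' 0 = E1 \<and> (\<forall>i. X' i + Zdiv r a (i + 1) = Zdiv r a i + X' (i - a))"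
    then have hp: "\<And>i. X' i = X' (i mod r)" and h0: "X' 0 = E1"
      and h3: "\<And>i. X' i + Zdiv r a (i + 1) = Zdiv r a i + X' (i - a)" by auto
    show "X' = Xf"
    proof
      fix i
      have "(\<lambda>i. X' i - Xf i) i = (\<lambda>i. X' i - Xf i) 0"
      proof (rule cyc_unique[OF r0 ab])
        fix i
        show "X' i - Xf i = X' (i mod r) - Xf (i mod r)" using hp[of i] X1[of i] by simp
        show "X' i - Xf i = X' (i - a) - Xf (i - a)" using h3[of i] X3[of i] unfolding gX_def by (rule hlp4)
      qed
      then show "X' i = Xf i" using h0 X2 by simp
    qed
  qed
  have Rf1: "Rf 1 = DXdiv r a - E1"
  proof
    fix \<rho>
    have b1: "(1 * b0) mod r = b0" using b0 by simp
    have "Rf 1 \<rho> = (\<Sum>m\<in>{1..b0}. gR (m * a) \<rho>)" unfolding Rf_def b1 sum_fun_apply by simp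
    also have "\<dots> = (DXdiv r a - E1) \<rho>"
    proof (cases \<rho>)
      case RE1
      then show ?thesis unfolding gR_def by (simp add: Zdiv_apply DZ_apply DX_apply qdiv_of_def prime_div_def)
    next
      case (RD k)
      have "(\<Sum>m\<in>{1..b0}. gR (m * a) \<rho>) = (\<Sum>m\<in>{1..b0}. of_int (Zdiv r a (m * a) (RD k)) - DZdiv r a (RD k))"
        unfolding gR_def RD by (simp add: qdiv_of_def)
      also have "\<dots> = of_int (\<Sum>m\<in>{1..b0}. Zdiv r a (m * a) (RD k)) - of_int b0 * DZdiv r a (RD k)"
        using b0 by (simp add: sum_subtractf)
      also have "\<dots> = (DXdiv r a - E1) \<rho>"
      proof (cases "0 \<le> k \<and> k \<le> r")
        case True
        have "(\<Sum>m\<in>{1..b0}. Zdiv r a (m * a) (RD k)) = (\<Sum>m\<in>{1..b0}. (if tau r a ((m * a) mod r) < k then 1 else 0))"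
          by (rule sum.cong) (auto simp: Zdiv_apply True)
        also have "\<dots> = cl r (k * b0)" by (rule count[OF ad b0 ab]) (use True in auto)
        finally have cnt: "(\<Sum>m\<in>{1..b0}. Zdiv r a (m * a) (RD k)) = cl r (k * b0)" .
        have md: "(- k * binv r a) mod r = (- (k * b0)) mod r"
        proof -
          have "(- k * binv r a) mod r = (- k * (binv r a mod r)) mod r" by (rule mod_mult_right_eq[symmetric])
          then show ?thesis unfolding b0_def by simp
        qed
        have "of_int (cl r (k * b0)) - of_int b0 * (of_int k / of_int r) = (of_int (cl r (k * b0)) :: rat) - of_int (k * b0) / of_int r"
          by simp
        also have "\<dots> = of_int ((- (k * b0)) mod r) / of_int r" by (rule cl_frac[OF r0])
        finally show ?thesis using True cnt md RD by (simp add: DZ_apply DX_apply prime_div_def)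
      next
        case False
        have "(\<Sum>m\<in>{1..b0}. Zdiv r a (m * a) (RD k)) = 0"
        proof (rule sum.neutral, rule ballI)
          fix m assume m: "m \<in> {1..b0}"
          have "0 \<le> tau r a ((m * a) mod r)" using tau_range[OF ad, of "(m * a) mod r"] r0 by auto
          then show "Zdiv r a (m * a) (RD k) = 0" using False by (auto simp: Zdiv_apply)
        qed
        then show ?thesis using False RD by (auto simp: DZ_apply DX_apply prime_div_def)
      qed
      finally show ?thesis using RD by simp
    qed
    finally show "Rf 1 \<rho> = (DXdiv r a - E1) \<rho>" .
  qed
  define D where "D i = qdiv_of (Xf i) - (DXdiv r a + Rf i - Rf (i + 1))" for i
  have Dper: "D i = D (i mod r)" for i
  proof -
    have "Rf (i + 1) = Rf (i mod r + 1)"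
      using R1[of "i + 1"] R1[of "i mod r + 1"] by (simp add: mod_add_left_eq)
    then show ?thesis unfolding D_def using X1[of i] R1[of i] by simp
  qed
  have Dstep: "D i = D (i - a)" for i
  proof -
    have e1: "qdiv_of (Xf i) - qdiv_of (Xf (i - a)) = qdiv_of (Zdiv r a i) - qdiv_of (Zdiv r a (i + 1))"
      using X3[of i] unfolding gX_def qdiv_diff[symmetric] by simp
    have e2: "Rf i - Rf (i - a) = qdiv_of (Zdiv r a i) - DZdiv r a" using R3[of i] unfolding gR_def .
    have e3: "Rf (i + 1) - Rf (i - a + 1) = qdiv_of (Zdiv r a (i + 1)) - DZdiv r a"
      using R3[of "i + 1"] unfolding gR_def by (simp add: algebra_simps)
    show ?thesis unfolding D_def using e1 e2 e3 by (rule hlp5)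
  qed
  have D0: "D 0 = 0"
    unfolding D_def using X2 R2 Rf1 qdiv_E1 by simp
  show ?thesis
  proof
    fix i assume i: "i \<in> {0..<r}"
    have "D i = D 0" by (rule cyc_unique[OF r0 ab Dper Dstep])
    then have "D i = 0" using D0 by simp
    moreover have "Rf ((i + 1) mod r) = Rf (i + 1)" using R1[of "i + 1"] by simp
    ultimately show "qdiv_of (Xdiv r a i) = DXdiv r a + Rdiv r a i - Rdiv r a ((i + 1) mod r)"
      unfolding Xdiv_eq Rdiv_eq D_def by simp
  qed
qed

end
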